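(* Let $0<p<1$ and $\alpha>-1$, let $\beta=\frac{1-p}{1+\alpha p}$, and define the sequence $(f_i)_{i\ge1}$ by $$f_1=\frac{p}{1+\beta(1+\alpha)},\qquad f_i=\frac{\beta(i-1+\alpha)}{1+\beta(i+\alpha)}\,f_{i-1}\quad (i>1).$$ Then (I) for all $i\ge1$, $0<f_i<1$ and $f_i>f_{i+1}$; and (II) $\sum_{i=1}^\infty f_i=p$ and $\sum_{i=1}^\infty i f_i = 1$.
   Context: Equivalently, $(f_i)$ is the unique solution of $f_1=p-\beta(1+\alpha)f_1$ and $f_i=\beta\big((i-1+\alpha)f_{i-1}-(i+\alpha)f_i\big)$ for $i>1$. *)

theory Defs
  imports "HOL-Analysis.Analysis"
begin

definition betaA :: "real \<Rightarrow> real \<Rightarrow> real" where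
  "betaA p \<alpha> = (1 - p) / (1 + \<alpha> * p)"

text \<open>The sequence f_i for i >= 1; the value at index 0 is an unused dummy (0).\<close>
fun fA :: "real \<Rightarrow> real \<Rightarrow> nat \<Rightarrow> real" where
  "fA p \<alpha> 0 = 0"
| "fA p \<alpha> (Suc 0) = p / (1 + betaA p \<alpha> * (1 + \<alpha>))"
| "fA p \<alpha> (Suc (Suc n)) =
     betaA p \<alpha> * (real (Suc (Suc n)) - 1 + \<alpha>) / (1 + betaA p \<alpha> * (real (Suc (Suc n)) + \<alpha>))
       * fA p \<alpha> (Suc n)"

end

theory Submission
  imports Defs
begin

context
  fixes p \<alpha> :: real
  assumes p0: "0 < p" and p1: "p < 1" and a1: "\<alpha> > -1"
begin

private abbreviation "f \<equiv> fA p \<alpha>"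
private abbreviation "b \<equiv> betaA p \<alpha>"

private lemma den_pos: "1 + \<alpha> * p > 0"
proof -
  have "(\<alpha> + 1) * p > 0" using a1 p0 by simp
  thus ?thesis using p1 by (simp add: algebra_simps)
qed

private lemma b_pos: "b > 0"
  using den_pos p1 by (simp add: betaA_def)

private lemma b_lt1: "b < 1"
proof -
  have "(\<alpha> + 1) * p > 0" using a1 p0 by simp
  hence "1 - p < 1 + \<alpha> * p" by (simp add: algebra_simps)
  thus ?thesis using den_pos by (simp add: betaA_def)
qed

private lemma f1: "f 1 * (1 + b * (1 + \<alpha>)) = p"
proof -
  have "1 + b * (1 + \<alpha>) > 0" using b_pos a1 by (simp add: add_pos_pos)
  thus ?thesis by simp
qed

private lemma frec: "n \<ge> 1 \<Longrightarrow> f (Suc n) * (1 + b * (real n + 1 + \<alpha>)) = b * (real n + \<alpha>) * f n"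
proof -
  assume "n \<ge> 1"
  then obtain m where m: "n = Suc m" by (cases n) auto
  have d: "1 + b * (real n + 1 + \<alpha>) > 0" using b_pos a1 by (simp add: add_pos_pos)
  have eq: "f (Suc n) = b * (real n + \<alpha>) / (1 + b * (real n + 1 + \<alpha>)) * f n"
    using m by (simp add: algebra_simps)
  show ?thesis using d eq by (simp add: field_simps)
qed

private lemma fpos: "n \<ge> 1 \<Longrightarrow> f n > 0"
proof (induction n rule: dec_induct)
  case base
  have "1 + b * (1 + \<alpha>) > 0" using b_pos a1 by (simp add: add_pos_pos)
  then show ?case using p0 by simp
next
  case (step n)
  have d: "1 + b * (real n + 1 + \<alpha>) > 0" using b_pos a1 by (simp add: add_pos_pos)
  have "b * (real n + \<alpha>) * f n > 0" using b_pos a1 step by simp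
  hence "f (Suc n) * (1 + b * (real n + 1 + \<alpha>)) > 0" using frec[OF step(1)] by simp
  then show ?case using d by (simp add: zero_less_mult_iff)
qed

private lemma fdec: "n \<ge> 1 \<Longrightarrow> f (Suc n) < f n"
proof -
  assume n: "n \<ge> 1"
  have d: "1 + b * (real n + 1 + \<alpha>) > 0" using b_pos a1 by (simp add: add_pos_pos)
  have "b * (real n + \<alpha>) * f n < (1 + b * (real n + 1 + \<alpha>)) * f n"
    using fpos[OF n] b_pos by (intro mult_strict_right_mono) (auto simp: algebra_simps)
  hence "f (Suc n) * (1 + b * (real n + 1 + \<alpha>)) < f n * (1 + b * (real n + 1 + \<alpha>))"
    using frec[OF n] by (simp add: algebra_simps)
  thus ?thesis using d by simp
qed

private lemma flt1: "n \<ge> 1 \<Longrightarrow> f n < 1"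
proof (induction n rule: dec_induct)
  case base
  have "1 + b * (1 + \<alpha>) > 1" using b_pos a1 by simp
  hence "f 1 * (1 + b * (1 + \<alpha>)) > f 1 * 1" using fpos[of 1] by (intro mult_strict_left_mono) auto
  then show ?case using f1 p1 by simp
next
  case (step n)
  then show ?case using fdec[OF step(1)] by simp
qed

private definition S :: "nat \<Rightarrow> real" where "S k = (\<Sum>i=1..k. f i)"
private definition T :: "nat \<Rightarrow> real" where "T k = (\<Sum>i=1..k. real i * f i)"

private lemma S_eq: "k \<ge> 1 \<Longrightarrow> S k = p - b * (real k + \<alpha>) * f k"
proof (induction k rule: dec_induct)
  case base
  then show ?case using f1 by (simp add: S_def algebra_simps del: fA.simps)
next
  case (step k)
  have "S (Suc k) = S k + f (Suc k)" by (simp add: S_def)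
  also have "\<dots> = p - f (Suc k) * (1 + b * (real k + 1 + \<alpha>)) + f (Suc k)"
    using step(3) frec[OF step(1)] by simp
  finally show ?case by (simp add: algebra_simps)
qed

private lemma T_eq: "k \<ge> 1 \<Longrightarrow> (1 - b) * T k = p + b * \<alpha> * S k - b * (real k + 1) * (real k + \<alpha>) * f k"
proof (induction k rule: dec_induct)
  case base
  have "(1 - b) * f 1 = f 1 * (1 + b * (1 + \<alpha>)) + b * \<alpha> * f 1 - b * 2 * (1 + \<alpha>) * f 1"
    by (simp add: algebra_simps del: fA.simps)
  hence "(1 - b) * f 1 = p + b * \<alpha> * f 1 - b * 2 * (1 + \<alpha>) * f 1" by (simp only: f1)
  moreover have "S 1 = f 1" "T 1 = f 1" by (simp_all add: S_def T_def del: fA.simps)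
  ultimately show ?case by (simp del: fA.simps add: algebra_simps)
next
  case (step k)
  have H: "b * (real k + \<alpha>) * f k = f (Suc k) * (1 + b * (real k + 1 + \<alpha>))" using frec[OF step(1)] by simp
  have "(1 - b) * T (Suc k) = (1 - b) * T k + (1 - b) * (real k + 1) * f (Suc k)"
    by (simp add: T_def algebra_simps)
  also have "\<dots> = p + b * \<alpha> * S k - (real k + 1) * (b * (real k + \<alpha>) * f k) + (1 - b) * (real k + 1) * f (Suc k)"
    using step(3) by (simp add: algebra_simps)
  also have "\<dots> = p + b * \<alpha> * S k - (real k + 1) * (f (Suc k) * (1 + b * (real k + 1 + \<alpha>))) + (1 - b) * (real k + 1) * f (Suc k)"
    using H by simp
  also have "\<dots> = p + b * \<alpha> * (S k + f (Suc k)) - b * (real (Suc k) + 1) * (real (Suc k) + \<alpha>) * f (Suc k)"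
    by (simp add: algebra_simps)
  finally show ?case by (simp add: S_def)
qed

lemma main:
  shows "(\<forall>i\<ge>1. 0 < fA p \<alpha> i \<and> fA p \<alpha> i < 1 \<and> fA p \<alpha> i > fA p \<alpha> (i + 1))
       \<and> ((\<lambda>n. fA p \<alpha> (n + 1)) sums p)
       \<and> ((\<lambda>n. real (n + 1) * fA p \<alpha> (n + 1)) sums 1)"
proof -
  have part1: "\<forall>i\<ge>1. 0 < f i \<and> f i < 1 \<and> f i > f (i + 1)"
    using fpos flt1 fdec by simp
  have fnn: "f (Suc n) \<ge> 0" for n using fpos[of "Suc n"] by simp
  have Sle: "S k \<le> p" if "k \<ge> 1" for k
  proof -
    have "b * (real k + \<alpha>) * f k \<ge> 0" using b_pos a1 fpos[OF that] that by simp
    thus ?thesis using S_eq[OF that] by simp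
  qed
  have Sge: "0 \<le> S k" for k
    unfolding S_def
  proof (intro sum_nonneg)
    fix i assume "i \<in> {1..k}"
    thus "0 \<le> f i" using fpos[of i] by simp
  qed
  define B where "B = (p + b * \<bar>\<alpha>\<bar> * p) / (1 - b)"
  have Tle: "T k \<le> B" for k
  proof (cases "k = 0")
    case True
    have "0 \<le> B" unfolding B_def using b_lt1 b_pos p0 by simp
    then show ?thesis using True by (simp add: T_def)
  next
    case False
    hence k: "k \<ge> 1" by simp
    have "real k + \<alpha> > 0" using k a1 by linarith
    hence "b * (real k + 1) * (real k + \<alpha>) * f k \<ge> 0" using b_pos fpos[OF k] by simp
    hence "(1 - b) * T k \<le> p + b * \<alpha> * S k" using T_eq[OF k] by simp
    also have "b * \<alpha> * S k \<le> b * \<bar>\<alpha>\<bar> * S k"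
      using b_pos Sge[of k] by (intro mult_right_mono mult_left_mono) auto
    also have "b * \<bar>\<alpha>\<bar> * S k \<le> b * \<bar>\<alpha>\<bar> * p"
      using b_pos Sle[OF k] by (intro mult_left_mono) auto
    finally have "(1 - b) * T k \<le> p + b * \<bar>\<alpha>\<bar> * p" by simp
    then show ?thesis unfolding B_def using b_lt1 by (simp add: field_simps)
  qed
  define a where "a = (\<lambda>n. real (n + 1) * f (n + 1))"
  have Tsum: "(\<Sum>n<N. a n) = T N" for N
    by (induction N) (simp_all add: a_def T_def)
  have Ssum: "(\<Sum>n<N. f (n + 1)) = S N" for N
    by (induction N) (simp_all add: S_def del: fA.simps)
  have anonneg: "a n \<ge> 0" for n unfolding a_def using fnn[of n] by simp
  have asum: "summable a"
  proof (rule bounded_imp_summable)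
    show "0 \<le> a n" for n by (rule anonneg)
    show "(\<Sum>k\<le>n. a k) \<le> B" for n
      using Tsum[of "Suc n"] Tle[of "Suc n"] lessThan_Suc_atMost by simp
  qed
  have a0: "a \<longlonglongrightarrow> 0" using asum by (rule summable_LIMSEQ_zero)
  have fz: "(\<lambda>n. f (n + 1)) \<longlonglongrightarrow> 0"
  proof (rule tendsto_sandwich[OF _ _ tendsto_const a0])
    show "\<forall>\<^sub>F n in sequentially. 0 \<le> f (n + 1)" using fnn by simp
    have "f (n + 1) \<le> a n" for n
    proof -
      have "1 * f (n + 1) \<le> real (n + 1) * f (n + 1)"
        using fnn[of n] by (intro mult_right_mono) auto
      thus ?thesis unfolding a_def by simp
    qed
    thus "\<forall>\<^sub>F n in sequentially. f (n + 1) \<le> a n" by simp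
  qed
  have geq: "(real (n + 1) + \<alpha>) * f (n + 1) = a n + \<alpha> * f (n + 1)" for n
    unfolding a_def by (simp add: algebra_simps)
  have gz: "(\<lambda>n. (real (n + 1) + \<alpha>) * f (n + 1)) \<longlonglongrightarrow> 0"
    unfolding geq using tendsto_add[OF a0 tendsto_mult_right_zero[OF fz, of \<alpha>]] by simp
  have "(\<lambda>n. p - b * ((real (n + 1) + \<alpha>) * f (n + 1))) \<longlonglongrightarrow> p - b * 0"
    by (intro tendsto_intros gz)
  moreover have "S (Suc n) = p - b * ((real (n + 1) + \<alpha>) * f (n + 1))" for n
    using S_eq[of "Suc n"] by simp
  ultimately have "(\<lambda>n. S (Suc n)) \<longlonglongrightarrow> p" by simp
  hence "S \<longlonglongrightarrow> p" by (rule LIMSEQ_imp_Suc)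
  hence sumf: "(\<lambda>n. f (n + 1)) sums p" unfolding sums_def Ssum .
  define Ti where "Ti = suminf a"
  have "a sums Ti" unfolding Ti_def using asum by (rule summable_sums)
  hence "T \<longlonglongrightarrow> Ti" unfolding sums_def Tsum .
  hence TS: "(\<lambda>n. T (Suc n)) \<longlonglongrightarrow> Ti" by (rule LIMSEQ_Suc)
  have "(\<lambda>n. S (Suc n)) \<longlonglongrightarrow> p" using \<open>S \<longlonglongrightarrow> p\<close> by (rule LIMSEQ_Suc)
  define M where "M = p + b * \<alpha> * p - (1 - b) * Ti"
  define h where "h = (\<lambda>n. b * (real (Suc n) + 1) * ((real (Suc n) + \<alpha>) * f (Suc n)))"
  have heq: "h n = p + b * \<alpha> * S (Suc n) - (1 - b) * T (Suc n)" for n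
    using T_eq[of "Suc n"] unfolding h_def by (simp add: algebra_simps)
  have hlim: "h \<longlonglongrightarrow> M"
    unfolding heq M_def by (intro tendsto_intros TS \<open>(\<lambda>n. S (Suc n)) \<longlonglongrightarrow> p\<close>)
  have hnn: "h n \<ge> 0" for n
    unfolding h_def using b_pos a1 fnn[of n] by simp
  have M0: "M \<ge> 0" using hlim hnn by (intro LIMSEQ_le_const) auto
  have "M = 0"
  proof (rule ccontr)
    assume "M \<noteq> 0"
    hence Mp: "M > 0" using M0 by simp
    have ev: "\<forall>\<^sub>F n in sequentially. M / 2 < h n"
      using order_tendstoD(1)[OF hlim, of "M / 2"] Mp by simp
    have gs: "summable (\<lambda>n. (2 * b / M) * ((real (n + 1) + \<alpha>) * f (n + 1)))"
    proof -
      have fs: "summable (\<lambda>n. f (n + 1))" using sumf by (rule sums_summable)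
      have "summable (\<lambda>n. a n + \<alpha> * f (n + 1))" by (intro summable_add summable_mult asum fs)
      thus ?thesis unfolding geq by (rule summable_mult)
    qed
    have "summable (\<lambda>n. inverse (real (n + 2)))"
    proof (rule summable_comparison_test_ev[OF _ gs])
      show "\<forall>\<^sub>F n in sequentially. norm (inverse (real (n + 2))) \<le> (2 * b / M) * ((real (n + 1) + \<alpha>) * f (n + 1))"
        using ev
      proof eventually_elim
        case (elim n)
        have "M / 2 < b * (real n + 2) * ((real (n + 1) + \<alpha>) * f (n + 1))"
          using elim unfolding h_def by (simp add: algebra_simps)
        hence "M < 2 * b * (real n + 2) * ((real (n + 1) + \<alpha>) * f (n + 1))" by simp
        hence "1 / (real n + 2) < (2 * b / M) * ((real (n + 1) + \<alpha>) * f (n + 1))"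
          using Mp by (simp add: field_simps)
        thus ?case by (simp add: divide_inverse add.commute)
      qed
    qed
    hence "summable (\<lambda>n. inverse (real n))"
      using summable_iff_shift[of "\<lambda>n. inverse (real n)" 2] by simp
    thus False using not_summable_harmonic by blast
  qed
  have key: "p + b * \<alpha> * p = 1 - b"
    unfolding betaA_def using den_pos by (simp add: field_simps)
  have "(1 - b) * Ti = (1 - b) * 1" using \<open>M = 0\<close> key unfolding M_def by simp
  hence "Ti = 1" using b_lt1 by simp
  hence "a sums 1" using \<open>a sums Ti\<close> by simp
  then show ?thesis using part1 sumf unfolding a_def by simp
qed

end

theorem lemmaA3:
  fixes p \<alpha> :: real
  assumes "0 < p" and "p < 1" and "\<alpha> > -1"
  shows "(\<forall>i\<ge>1. 0 < fA p \<alpha> i \<and> fA p \<alpha> i < 1 \<and> fA p \<alpha> i > fA p \<alpha> (i + 1))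
       \<and> ((\<lambda>n. fA p \<alpha> (n + 1)) sums p)
       \<and> ((\<lambda>n. real (n + 1) * fA p \<alpha> (n + 1)) sums 1)"
  using main[OF assms] .

end
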